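(* Let $G$ be a torsion-free group acting $\kappa$-acylindrically on a simplicial tree $T$. Let $g,h\in G$ be loxodromic with axes $\alpha_g,\alpha_h$ and translation lengths $\lambda_T(g),\lambda_T(h)$. If $g$ and $h$ do not have a common nontrivial power, then $\mathrm{diam}_T(\alpha_g\cap\alpha_h)\le\kappa+\lambda_T(g)\cdot\lambda_T(h)$.
   Context: An action on a simplicial tree is $\kappa$-acylindrical if the pointwise stabiliser of every edge path of length at least $\kappa+1$ is trivial. For a loxodromic element $g$, its axis $\alpha_g$ is the unique $g$-invariant bi-infinite geodesic on which $g$ translates, and $\lambda_T(g)>0$ is its translation length. Common nontrivial power: $g^m=h^n\neq1$ for some integers $m,n$. *)

theory Defs
  imports "HOL-Algebra.Group"
begin

text \<open>Simplicial trees: the vertex set is the whole type 'v, adjacency is a symmetric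
irreflexive relation E.  Paths are given as lists of vertices.\<close>

definition is_walk :: "('v \<Rightarrow> 'v \<Rightarrow> bool) \<Rightarrow> 'v list \<Rightarrow> bool" where
  "is_walk E p \<longleftrightarrow> p \<noteq> [] \<and> (\<forall>i. Suc i < length p \<longrightarrow> E (p ! i) (p ! Suc i))"

text \<open>Edge path without repeated vertices (in a tree: a geodesic segment);
a list of length n+1 is an edge path of length n.\<close>
definition is_path :: "('v \<Rightarrow> 'v \<Rightarrow> bool) \<Rightarrow> 'v list \<Rightarrow> bool" where
  "is_path E p \<longleftrightarrow> is_walk E p \<and> distinct p"

definition tree_graph :: "('v \<Rightarrow> 'v \<Rightarrow> bool) \<Rightarrow> bool" where
  "tree_graph E \<longleftrightarrow>
     (\<forall>u v. E u v \<longrightarrow> E v u) \<and> (\<forall>v. \<not> E v v) \<and>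
     (\<forall>u v. \<exists>p. is_walk E p \<and> hd p = u \<and> last p = v) \<and>
     \<not> (\<exists>p. is_path E p \<and> length p \<ge> 3 \<and> E (last p) (hd p))"

definition tdist :: "('v \<Rightarrow> 'v \<Rightarrow> bool) \<Rightarrow> 'v \<Rightarrow> 'v \<Rightarrow> nat" where
  "tdist E u v = (LEAST n. \<exists>p. is_walk E p \<and> hd p = u \<and> last p = v \<and> length p = Suc n)"

definition tree_action :: "('g, 'b) monoid_scheme \<Rightarrow> ('v \<Rightarrow> 'v \<Rightarrow> bool) \<Rightarrow> ('g \<Rightarrow> 'v \<Rightarrow> 'v) \<Rightarrow> bool" where
  "tree_action G E \<phi> \<longleftrightarrow> group G \<and> tree_graph E \<and>
     (\<forall>g\<in>carrier G. bij (\<phi> g) \<and> (\<forall>u v. E (\<phi> g u) (\<phi> g v) \<longleftrightarrow> E u v)) \<and>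
     (\<forall>v. \<phi> \<one>\<^bsub>G\<^esub> v = v) \<and>
     (\<forall>g\<in>carrier G. \<forall>h\<in>carrier G. \<forall>v. \<phi> (g \<otimes>\<^bsub>G\<^esub> h) v = \<phi> g (\<phi> h v))"

definition torsion_free :: "('g, 'b) monoid_scheme \<Rightarrow> bool" where
  "torsion_free G \<longleftrightarrow> (\<forall>g\<in>carrier G. \<forall>n::nat. n > 0 \<longrightarrow> g [^]\<^bsub>G\<^esub> n = \<one>\<^bsub>G\<^esub> \<longrightarrow> g = \<one>\<^bsub>G\<^esub>)"

text \<open>kappa-acylindrical: pointwise stabiliser of every edge path of length at least
kappa+1 (i.e. at least kappa+2 vertices) is trivial.\<close>
definition acylindrical :: "('g, 'b) monoid_scheme \<Rightarrow> ('v \<Rightarrow> 'v \<Rightarrow> bool) \<Rightarrow> ('g \<Rightarrow> 'v \<Rightarrow> 'v) \<Rightarrow> nat \<Rightarrow> bool" where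
  "acylindrical G E \<phi> \<kappa> \<longleftrightarrow>
     (\<forall>p. is_path E p \<and> length p \<ge> \<kappa> + 2 \<longrightarrow>
        {g\<in>carrier G. \<forall>v\<in>set p. \<phi> g v = v} = {\<one>\<^bsub>G\<^esub>})"

definition biinf_geodesic :: "('v \<Rightarrow> 'v \<Rightarrow> bool) \<Rightarrow> (int \<Rightarrow> 'v) \<Rightarrow> bool" where
  "biinf_geodesic E f \<longleftrightarrow> (\<forall>i j. tdist E (f i) (f j) = nat \<bar>i - j\<bar>)"

definition translates_along :: "('v \<Rightarrow> 'v \<Rightarrow> bool) \<Rightarrow> ('g \<Rightarrow> 'v \<Rightarrow> 'v) \<Rightarrow> 'g \<Rightarrow> (int \<Rightarrow> 'v) \<Rightarrow> bool" where
  "translates_along E \<phi> g f \<longleftrightarrow> biinf_geodesic E f \<and> (\<exists>k>0. \<forall>i. \<phi> g (f i) = f (i + k))"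

definition loxodromic :: "('g, 'b) monoid_scheme \<Rightarrow> ('v \<Rightarrow> 'v \<Rightarrow> bool) \<Rightarrow> ('g \<Rightarrow> 'v \<Rightarrow> 'v) \<Rightarrow> 'g \<Rightarrow> bool" where
  "loxodromic G E \<phi> g \<longleftrightarrow> g \<in> carrier G \<and> (\<exists>f. translates_along E \<phi> g f)"

text \<open>The axis: vertex set of the (unique) g-invariant bi-infinite geodesic on which g translates.\<close>
definition axis :: "('v \<Rightarrow> 'v \<Rightarrow> bool) \<Rightarrow> ('g \<Rightarrow> 'v \<Rightarrow> 'v) \<Rightarrow> 'g \<Rightarrow> 'v set" where
  "axis E \<phi> g = \<Union>{range f | f. translates_along E \<phi> g f}"

definition transl_len :: "('v \<Rightarrow> 'v \<Rightarrow> bool) \<Rightarrow> ('g \<Rightarrow> 'v \<Rightarrow> 'v) \<Rightarrow> 'g \<Rightarrow> nat" where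
  "transl_len E \<phi> g = (LEAST n. \<exists>v. tdist E v (\<phi> g v) = n)"

end

theory Submission
  imports Defs
begin


lemma walk_single[simp]: "is_walk E [x]"
  by (simp add: is_walk_def)

lemma walk_Cons2[simp]: "is_walk E (x # y # p) \<longleftrightarrow> E x y \<and> is_walk E (y # p)"
proof
  assume "is_walk E (x # y # p)"
  then show "E x y \<and> is_walk E (y # p)"
    unfolding is_walk_def by (metis Suc_less_eq length_Cons nth_Cons_0 nth_Cons_Suc zero_less_Suc list.distinct(1))
next
  assume a: "E x y \<and> is_walk E (y # p)"
  show "is_walk E (x # y # p)"
    unfolding is_walk_def
  proof (intro conjI allI impI)
    fix i assume "Suc i < length (x # y # p)"
    then show "E ((x # y # p) ! i) ((x # y # p) ! Suc i)"
      using a unfolding is_walk_def by (cases i) auto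
  qed simp
qed

lemma walk_Nil[simp]: "\<not> is_walk E []"
  by (simp add: is_walk_def)

lemma walk_append:
  "p \<noteq> [] \<Longrightarrow> q \<noteq> [] \<Longrightarrow> is_walk E (p @ q) \<longleftrightarrow> is_walk E p \<and> is_walk E q \<and> E (last p) (hd q)"
proof (induction p)
  case Nil then show ?case by simp
next
  case (Cons x p)
  show ?case
  proof (cases p)
    case Nil
    then show ?thesis using Cons by (cases q) auto
  next
    case pc: (Cons y p')
    then show ?thesis using Cons.IH Cons.prems by (cases q) auto
  qed
qed

lemma walk_append_shared:
  assumes "is_walk E p" "is_walk E q" "last p = hd q"
  shows "is_walk E (p @ tl q) \<and> hd (p @ tl q) = hd p \<and> last (p @ tl q) = last q
     \<and> set (p @ tl q) \<subseteq> set p \<union> set q"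
proof (cases "tl q")
  case Nil
  with assms obtain x where "q = [x]" by (cases q) auto
  then show ?thesis using assms by auto
next
  case (Cons y r)
  then obtain x where q: "q = x # y # r" using assms by (cases q) auto
  have "p \<noteq> []" using assms by auto
  then show ?thesis using assms q walk_append[of p "y # r" E] by (auto simp: list.set_sel)
qed

lemma walk_take: "is_walk E p \<Longrightarrow> 0 < n \<Longrightarrow> is_walk E (take n p)"
  unfolding is_walk_def by auto

lemma walk_rev:
  assumes sym: "\<And>u v. E u v \<Longrightarrow> E v u"
  shows "is_walk E p \<Longrightarrow> is_walk E (rev p)"
proof (induction p)
  case Nil then show ?case by simp
next
  case (Cons x p)
  show ?case
  proof (cases p)
    case Nil then show ?thesis by simp
  next
    case (Cons y p')
    have "is_walk E (rev p @ [x])"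
      using Cons.IH Cons.prems Cons walk_append[of "rev p" "[x]" E] sym by (auto simp: last_rev)
    then show ?thesis by simp
  qed
qed

lemma walk_map:
  assumes "\<And>u v. E u v \<Longrightarrow> E (f u) (f v)"
  shows "is_walk E p \<Longrightarrow> is_walk E (map f p)"
  using assms unfolding is_walk_def by auto

lemma tdist_le:
  assumes "is_walk E p" "hd p = u" "last p = v"
  shows "tdist E u v \<le> length p - 1"
proof -
  have "length p = Suc (length p - 1)" using assms by (cases p) auto
  then show ?thesis unfolding tdist_def using assms
    by (intro Least_le) auto
qed

locale tr =
  fixes E :: "'v \<Rightarrow> 'v \<Rightarrow> bool"
  assumes tg: "tree_graph E"
begin

lemma sym: "E u v \<Longrightarrow> E v u" using tg unfolding tree_graph_def by blast
lemma conn: "\<exists>p. is_walk E p \<and> hd p = u \<and> last p = v" using tg unfolding tree_graph_def by blast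
lemma nocyc: "is_path E p \<Longrightarrow> length p \<ge> 3 \<Longrightarrow> E (last p) (hd p) \<Longrightarrow> False"
  using tg unfolding tree_graph_def by blast

lemma tdist_ex: "\<exists>p. is_walk E p \<and> hd p = u \<and> last p = v \<and> length p = Suc (tdist E u v)"
proof -
  obtain p where p: "is_walk E p" "hd p = u" "last p = v" using conn by blast
  then have "length p = Suc (length p - 1)" by (cases p) auto
  with p have "\<exists>n. \<exists>p. is_walk E p \<and> hd p = u \<and> last p = v \<and> length p = Suc n" by blast
  then show ?thesis unfolding tdist_def by (rule LeastI_ex)
qed

lemma tdist_sym: "tdist E u v = tdist E v u"
proof -
  have *: "tdist E x y \<le> tdist E y x" for x y
  proof -
    obtain p where p: "is_walk E p" "hd p = y" "last p = x" "length p = Suc (tdist E y x)"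
      using tdist_ex by blast
    have "tdist E x y \<le> length (rev p) - 1"
      using p walk_rev[of E, OF sym] by (intro tdist_le) (auto simp: hd_rev last_rev)
    then show ?thesis using p by simp
  qed
  show ?thesis using *[of u v] *[of v u] by simp
qed

lemma tdist_triangle: "tdist E u w \<le> tdist E u v + tdist E v w"
proof -
  obtain p where p: "is_walk E p" "hd p = u" "last p = v" "length p = Suc (tdist E u v)"
    using tdist_ex by blast
  obtain q where q: "is_walk E q" "hd q = v" "last q = w" "length q = Suc (tdist E v w)"
    using tdist_ex by blast
  have c: "is_walk E (p @ tl q)" "hd (p @ tl q) = u" "last (p @ tl q) = w"
    using walk_append_shared[of E p q] p q by auto
  have "tdist E u w \<le> length (p @ tl q) - 1" by (rule tdist_le[OF c])
  then show ?thesis using p q by simp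
qed

lemma tdist_refl[simp]: "tdist E u u = 0"
  using tdist_le[of E "[u]" u u] by simp

lemma tdist_0: "tdist E u v = 0 \<Longrightarrow> u = v"
  using tdist_ex[of u v] by (auto simp: length_Suc_conv)

lemma tdist_1: "tdist E u v = 1 \<Longrightarrow> E u v"
  using tdist_ex[of u v] by (auto simp: length_Suc_conv)

lemma tdist_nth: assumes "is_walk E w" "i < length w" shows "tdist E (hd w) (w ! i) \<le> i"
proof -
  have ne: "take (Suc i) w \<noteq> []" using assms by (cases w) auto
  have l: "last (take (Suc i) w) = w ! i" using ne assms by (simp add: last_conv_nth)
  have h: "hd (take (Suc i) w) = hd w" using assms by (cases w) auto
  show ?thesis using tdist_le[OF walk_take[OF assms(1), of "Suc i"] h l] assms by simp
qed

lemma cyc: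
  assumes "is_path E p" "is_path E q" "is_path E s" "length s \<ge> 2" "last s = hd p"
    "E (hd q) (hd s)" "set (butlast s) \<inter> set p = {}" "set (butlast s) \<inter> set q = {}"
    "last p \<in> set q" "length s \<ge> 3 \<or> hd p \<noteq> hd q"
  shows False
  using assms
proof (induction p arbitrary: s)
  case Nil then show ?case by (simp add: is_path_def)
next
  case (Cons x p')
  have sne: "s \<noteq> []" using Cons.prems(4) by auto
  have "set s = set (butlast s @ [last s])" using sne by simp
  also have "\<dots> = set (butlast s) \<union> {x}" using Cons.prems(5) by simp
  finally have sset: "set s = set (butlast s) \<union> {x}" .
  have sw: "is_walk E s" "distinct s" using Cons.prems(3) by (simp_all add: is_path_def)
  have pw: "is_walk E (x # p')" "distinct (x # p')" using Cons.prems(1) by (simp_all add: is_path_def)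
  have qw0: "is_walk E q" "distinct q" using Cons.prems(2) by (simp_all add: is_path_def)
  show ?case
  proof (cases "x \<in> set q")
    case True
    obtain q1 q2 where qs: "q = q1 @ x # q2" "x \<notin> set q1" using split_list_first[OF True] by blast
    show False
    proof (cases "q1 = []")
      case True
      then have hq: "hd q = x" using qs by simp
      then have "length s \<ge> 3" using Cons.prems(10) by simp
      moreover have "E (last s) (hd s)" using Cons.prems(5,6) hq by simp
      ultimately show False using nocyc Cons.prems(3) by blast
    next
      case False
      define c where "c = s @ rev q1"
      have qw: "is_walk E (q1 @ x # q2)" "distinct (q1 @ x # q2)" using qw0 qs by simp_all
      then have w1: "is_walk E q1" "E (last q1) x" using walk_append[of q1 "x # q2" E] False by simp_all
      have rw: "is_walk E (rev q1)" using w1 walk_rev[of E, OF sym] by blast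
      have "E (last s) (hd (rev q1))" using w1(2) sym Cons.prems(5) False by (simp add: hd_rev)
      then have cw: "is_walk E c" unfolding c_def
        using walk_append[of s "rev q1" E] False sne sw rw by simp
      have dq1: "distinct q1" using qw(2) by simp
      have "set s \<inter> set q1 = {}" using sset Cons.prems(8) qs by auto
      then have cd: "distinct c" unfolding c_def using dq1 sw(2) by simp
      have "length c \<ge> 3" unfolding c_def using Cons.prems(4) False by (cases q1) simp_all
      moreover have "last c = hd q" unfolding c_def using False qs by (simp add: last_rev)
      moreover have "hd c = hd s" unfolding c_def using sne by simp
      ultimately show False using nocyc[of c] cw cd Cons.prems(6) by (simp add: is_path_def)
    qed
  next
    case False
    then have "p' \<noteq> []" using Cons.prems(9) by auto
    then obtain x' p'' where p': "p' = x' # p''" by (cases p') auto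
    have px: "E x x'" "distinct (x # x' # p'')" "is_walk E (x' # p'')"
      using pw p' by simp_all
    define s' where "s' = s @ [x']"
    have xb: "x' \<notin> set (butlast s)" using Cons.prems(7) p' by auto
    have "x' \<noteq> x" using px(2) by auto
    then have "x' \<notin> set s" using sset xb by simp
    moreover have "is_walk E s'" unfolding s'_def using Cons.prems(5) px(1) sne sw
      walk_append[of s "[x']" E] by simp
    ultimately have "is_path E s'" unfolding s'_def using sw(2) by (simp add: is_path_def)
    moreover have "length s' \<ge> 2" "length s' \<ge> 3" unfolding s'_def using Cons.prems(4) by simp_all
    moreover have "last s' = hd p'" unfolding s'_def p' by simp
    moreover have "E (hd q) (hd s')" unfolding s'_def using sne Cons.prems(6) by simp
    moreover have "set (butlast s') \<inter> set p' = {}"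
    proof -
      have "butlast s' = s" unfolding s'_def by simp
      moreover have "x \<notin> set p'" using pw(2) by simp
      moreover have "set (butlast s) \<inter> set p' = {}" using Cons.prems(7) by auto
      ultimately show ?thesis using sset by auto
    qed
    moreover have "set (butlast s') \<inter> set q = {}"
    proof -
      have "butlast s' = s" unfolding s'_def by simp
      then show ?thesis using sset Cons.prems(8) False by auto
    qed
    moreover have "last p' \<in> set q" using Cons.prems(9) p' by simp
    moreover have "is_path E p'" using px p' by (simp add: is_path_def)
    ultimately show False using Cons.IH Cons.prems(2) by blast
  qed
qed

lemma path_unique:
  "is_path E p \<Longrightarrow> is_path E q \<Longrightarrow> hd p = hd q \<Longrightarrow> last p = last q \<Longrightarrow> p = q"
proof (induction p arbitrary: q)
  case Nil then show ?case by (simp add: is_path_def)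
next
  case (Cons x p')
  obtain q' where q: "q = x # q'" using Cons.prems by (cases q) (auto simp: is_path_def)
  show ?case
  proof (cases "p' = []")
    case True
    have "q' = []"
    proof (rule ccontr)
      assume "q' \<noteq> []"
      then have "last q' = x" "last q' \<in> set q'" using Cons.prems True q by auto
      then show False using Cons.prems(2) q by (auto simp: is_path_def)
    qed
    then show ?thesis using q True by simp
  next
    case False
    have "q' \<noteq> []"
    proof
      assume "q' = []"
      then have "last p' = x" "last p' \<in> set p'" using Cons.prems False q by auto
      then show False using Cons.prems(1) by (auto simp: is_path_def)
    qed
    obtain x1 p'' where p': "p' = x1 # p''" using False by (cases p') auto
    obtain y1 q'' where q': "q' = y1 # q''" using \<open>q' \<noteq> []\<close> by (cases q') auto
    have pp: "is_path E p'" "is_path E q'" using Cons.prems q p' q' by (auto simp: is_path_def)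
    have lp: "last p' = last q'" using Cons.prems q p' q' by simp
    show ?thesis
    proof (cases "x1 = y1")
      case True
      then show ?thesis using Cons.IH[OF pp(1) pp(2)] lp p' q' q by simp
    next
      case ne: False
      have "is_path E [x, x1]" using Cons.prems(1) p' by (auto simp: is_path_def)
      moreover have "E (hd q') (hd [x, x1])" using Cons.prems(2) q q' sym by (auto simp: is_path_def)
      moreover have "set (butlast [x, x1]) \<inter> set p' = {}" "set (butlast [x, x1]) \<inter> set q' = {}"
        using Cons.prems(1,2) q by (auto simp: is_path_def)
      moreover have "last p' \<in> set q'" using lp q' by simp
      ultimately have False using cyc[OF pp(1) pp(2), of "[x, x1]"] p' q' ne by simp
      then show ?thesis ..
    qed
  qed
qed

lemma walk_reduce:
  "is_walk E w \<Longrightarrow> \<exists>p. is_path E p \<and> hd p = hd w \<and> last p = last w \<and> set p \<subseteq> set w"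
proof (induction w)
  case Nil then show ?case by simp
next
  case (Cons x w')
  show ?case
  proof (cases "w' = []")
    case True then show ?thesis by (intro exI[of _ "[x]"]) (auto simp: is_path_def)
  next
    case False
    then obtain y w'' where w': "w' = y # w''" by (cases w') auto
    have ww: "is_walk E w'" "E x y" using Cons.prems w' by simp_all
    obtain p' where "is_path E p' \<and> hd p' = hd w' \<and> last p' = last w' \<and> set p' \<subseteq> set w'"
      using Cons.IH[OF ww(1)] by (rule exE)
    then have p': "is_path E p'" "hd p' = hd w'" "last p' = last w'" "set p' \<subseteq> set w'" by simp_all
    show ?thesis
    proof (cases "x \<in> set p'")
      case True
      obtain p1 p2 where ps: "p' = p1 @ x # p2" using split_list[OF True] by blast
      have dd: "distinct (p1 @ x # p2)" "is_walk E (p1 @ x # p2)" using p'(1) ps by (simp_all add: is_path_def)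
      have "is_walk E (x # p2)"
        using dd(2) walk_append[of p1 "x # p2" E] by (cases "p1 = []") auto
      moreover have "distinct (x # p2)" using dd(1) by simp
      moreover have "last (x # p2) = last (x # w')" using ps p'(3) w' by simp
      moreover have "set (x # p2) \<subseteq> set (x # w')" using ps p'(4) by auto
      ultimately show ?thesis by (intro exI[of _ "x # p2"]) (simp add: is_path_def)
    next
      case False
      have pne: "p' \<noteq> []" using p' by (auto simp: is_path_def)
      then obtain z p'' where "p' = z # p''" by (cases p') auto
      have "is_walk E (x # p')" using ww p' \<open>p' = z # p''\<close> w' by (simp add: is_path_def)
      moreover have "distinct (x # p')" using False p'(1) by (simp add: is_path_def)
      moreover have "last (x # p') = last (x # w')" using p'(3) pne w' by simp
      moreover have "set (x # p') \<subseteq> set (x # w')" using p'(4) by auto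
      ultimately show ?thesis by (intro exI[of _ "x # p'"]) (simp add: is_path_def)
    qed
  qed
qed

lemma path_in_walk:
  assumes "is_walk E w" "is_path E p" "hd p = hd w" "last p = last w"
  shows "set p \<subseteq> set w"
proof -
  obtain q where q: "is_path E q" "hd q = hd w" "last q = last w" "set q \<subseteq> set w"
    using walk_reduce[OF assms(1)] by blast
  have "p = q" using path_unique[OF assms(2) q(1)] q assms by simp
  then show ?thesis using q by simp
qed

end



context tr
begin

lemma geo_dist: "biinf_geodesic E f \<Longrightarrow> tdist E (f i) (f j) = nat \<bar>i - j\<bar>"
  unfolding biinf_geodesic_def by blast

lemma geo_inj: "biinf_geodesic E f \<Longrightarrow> f i = f j \<Longrightarrow> i = j"
  using geo_dist[of f i j] by simp

lemma geo_path:
  assumes bg: "biinf_geodesic E f" and ij: "i \<le> j"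
  shows "is_path E (map f [i..j]) \<and> hd (map f [i..j]) = f i \<and> last (map f [i..j]) = f j"
proof -
  have ne: "[i..j] \<noteq> []" using ij by simp
  have w: "is_walk E (map f [i..j])"
    unfolding is_walk_def
  proof (intro conjI allI impI)
    show "map f [i..j] \<noteq> []" using ne by simp
    fix n assume n: "Suc n < length (map f [i..j])"
    then have "i + int (Suc n) \<le> j" by simp
    then have "map f [i..j] ! n = f (i + int n)" "map f [i..j] ! Suc n = f (i + int (Suc n))"
      using n by (simp_all del: of_nat_Suc)
    moreover have "tdist E (f (i + int n)) (f (i + int (Suc n))) = 1" using geo_dist[OF bg] by simp
    ultimately show "E (map f [i..j] ! n) (map f [i..j] ! Suc n)" using tdist_1 by simp
  qed
  have "inj_on f {i..j}" using geo_inj[OF bg] by (auto simp: inj_on_def)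
  then have d: "distinct (map f [i..j])" by (simp add: distinct_map)
  have "hd (map f [i..j]) = f i" using ne ij by (simp add: hd_map hd_conv_nth)
  moreover have "last (map f [i..j]) = f j" using ne ij
    by (simp add: last_map last_conv_nth nth_upto)
  ultimately show ?thesis using w d by (simp add: is_path_def)
qed

end

locale act = tr E for E :: "'v \<Rightarrow> 'v \<Rightarrow> bool" +
  fixes G :: "('g, 'b) monoid_scheme" and \<phi> :: "'g \<Rightarrow> 'v \<Rightarrow> 'v"
  assumes ta: "tree_action G E \<phi>"
begin

lemma grp: "group G" using ta by (simp add: tree_action_def)
lemma phiE: "g \<in> carrier G \<Longrightarrow> E u v \<Longrightarrow> E (\<phi> g u) (\<phi> g v)"
  using ta by (simp add: tree_action_def)
lemma phi_one: "\<phi> \<one>\<^bsub>G\<^esub> v = v" using ta by (simp add: tree_action_def)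
lemma phi_mult: "g \<in> carrier G \<Longrightarrow> h \<in> carrier G \<Longrightarrow> \<phi> (g \<otimes>\<^bsub>G\<^esub> h) v = \<phi> g (\<phi> h v)"
  using ta by (simp add: tree_action_def)
lemma phi_inv: "g \<in> carrier G \<Longrightarrow> \<phi> (inv\<^bsub>G\<^esub> g) (\<phi> g v) = v"
  using phi_mult[of "inv\<^bsub>G\<^esub> g" g v] phi_one group.l_inv[OF grp] group.inv_closed[OF grp] by simp

lemma iso_le: assumes "g \<in> carrier G" shows "tdist E (\<phi> g u) (\<phi> g v) \<le> tdist E u v"
proof -
  obtain p where p: "is_walk E p" "hd p = u" "last p = v" "length p = Suc (tdist E u v)"
    using tdist_ex by blast
  have "is_walk E (map (\<phi> g) p)" using walk_map[of E "\<phi> g", OF phiE[OF assms]] p(1) by blast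
  moreover have "p \<noteq> []" using p by auto
  ultimately have "tdist E (\<phi> g u) (\<phi> g v) \<le> length (map (\<phi> g) p) - 1"
    using p by (intro tdist_le) (auto simp: hd_map last_map)
  then show ?thesis using p by simp
qed

lemma tpow_nat:
  assumes g: "g \<in> carrier G" and s: "\<forall>i. \<phi> g (f i) = f (i + k)"
  shows "\<phi> (g [^]\<^bsub>G\<^esub> (n::nat)) (f i) = f (i + int n * k)"
proof (induction n arbitrary: i)
  case 0 then show ?case by (simp add: phi_one)
next
  case (Suc n)
  have "\<phi> (g [^]\<^bsub>G\<^esub> Suc n) (f i) = \<phi> (g [^]\<^bsub>G\<^esub> n) (\<phi> g (f i))"
    using phi_mult g monoid.nat_pow_closed[OF group.is_monoid[OF grp]] by simp
  also have "\<dots> = f (i + k + int n * k)" using s Suc.IH by simp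
  finally show ?case by (simp add: algebra_simps)
qed

lemma tpow_int:
  assumes g: "g \<in> carrier G" and s: "\<forall>i. \<phi> g (f i) = f (i + k)"
  shows "\<phi> (g [^]\<^bsub>G\<^esub> (m::int)) (f i) = f (i + m * k)"
proof (cases "m < 0")
  case False
  then have "g [^]\<^bsub>G\<^esub> m = g [^]\<^bsub>G\<^esub> (nat m)" by (simp add: pow_nat)
  then show ?thesis using tpow_nat[OF g s, of "nat m" i] False by simp
next
  case True
  let ?a = "g [^]\<^bsub>G\<^esub> (nat (- m))"
  have ac: "?a \<in> carrier G" using monoid.nat_pow_closed[OF group.is_monoid[OF grp] g] by blast
  have "g [^]\<^bsub>G\<^esub> m = inv\<^bsub>G\<^esub> ?a" using True by (subst int_pow_def2) simp
  moreover have "f i = \<phi> ?a (f (i + m * k))"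
    using tpow_nat[OF g s, of "nat (-m)" "i + m * k"] True by (simp add: algebra_simps)
  ultimately show ?thesis using phi_inv[OF ac] by metis
qed

lemma pow_nat_closed: "g \<in> carrier G \<Longrightarrow> g [^]\<^bsub>G\<^esub> (n::nat) \<in> carrier G"
  using monoid.nat_pow_closed[OF group.is_monoid[OF grp]] by blast
lemma pow_int_closed: "g \<in> carrier G \<Longrightarrow> g [^]\<^bsub>G\<^esub> (n::int) \<in> carrier G"
  using group.int_pow_closed[OF grp] by blast

lemma disp_pow:
  assumes g: "g \<in> carrier G"
  shows "tdist E v (\<phi> (g [^]\<^bsub>G\<^esub> (n::nat)) v) \<le> n * tdist E v (\<phi> g v)"
proof (induction n)
  case 0 then show ?case by (simp add: phi_one)
next
  case (Suc n)
  let ?a = "g [^]\<^bsub>G\<^esub> n"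
  have ac: "?a \<in> carrier G" using pow_nat_closed[OF g] .
  have eq: "\<phi> (g [^]\<^bsub>G\<^esub> Suc n) v = \<phi> ?a (\<phi> g v)" using phi_mult[OF ac g] by simp
  have "tdist E v (\<phi> ?a (\<phi> g v)) \<le> tdist E v (\<phi> ?a v) + tdist E (\<phi> ?a v) (\<phi> ?a (\<phi> g v))"
    by (rule tdist_triangle)
  also have "\<dots> \<le> n * tdist E v (\<phi> g v) + tdist E v (\<phi> g v)"
    using Suc.IH iso_le[OF ac, of v "\<phi> g v"] by linarith
  finally show ?case using eq by simp
qed

lemma disp_lower:
  assumes g: "g \<in> carrier G" and bg: "biinf_geodesic E f" and s: "\<forall>i. \<phi> g (f i) = f (i + k)"
    and k: "k > 0"
  shows "k \<le> int (tdist E v (\<phi> g v))"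
proof (rule ccontr)
  assume "\<not> ?thesis"
  then have dk: "int (tdist E v (\<phi> g v)) + 1 \<le> k" by simp
  define d where "d = tdist E v (\<phi> g v)"
  define c where "c = tdist E (f 0) v"
  define n where "n = 2 * c + 1"
  let ?a = "g [^]\<^bsub>G\<^esub> n"
  have ac: "?a \<in> carrier G" using pow_nat_closed[OF g] .
  have fa: "\<phi> ?a (f 0) = f (int n * k)" using tpow_nat[OF g s, of n 0] by simp
  have "tdist E (f 0) (f (int n * k)) = nat (int n * k)" using geo_dist[OF bg] k by simp
  moreover have "tdist E (f 0) (\<phi> ?a (f 0)) \<le> tdist E (f 0) v + tdist E v (\<phi> ?a (f 0))"
    by (rule tdist_triangle)
  moreover have "tdist E v (\<phi> ?a (f 0)) \<le> tdist E v (\<phi> ?a v) + tdist E (\<phi> ?a v) (\<phi> ?a (f 0))"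
    by (rule tdist_triangle)
  moreover have "tdist E (\<phi> ?a v) (\<phi> ?a (f 0)) \<le> c"
    using iso_le[OF ac, of v "f 0"] tdist_sym unfolding c_def by simp
  moreover have "tdist E v (\<phi> ?a v) \<le> n * d" unfolding d_def by (rule disp_pow[OF g])
  ultimately have "nat (int n * k) \<le> c + n * d + c" unfolding c_def using fa by simp
  moreover have "0 \<le> int n * k" using k by simp
  ultimately have "int n * k \<le> int (c + n * d + c)" by (simp add: nat_le_iff)
  then have "int n * k \<le> int c + int n * int d + int c" by simp
  moreover have "int n * (int d + 1) \<le> int n * k" using dk unfolding d_def
    by (intro mult_left_mono) auto
  ultimately have "int n \<le> 2 * int c" by (simp add: algebra_simps)
  then show False unfolding n_def by simp
qed

lemma transl_eq:
  assumes g: "g \<in> carrier G" and bg: "biinf_geodesic E f" and s: "\<forall>i. \<phi> g (f i) = f (i + k)"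
    and k: "k > 0"
  shows "k = int (transl_len E \<phi> g)"
proof -
  have "transl_len E \<phi> g = nat k"
    unfolding transl_len_def
  proof (rule Least_equality)
    have "tdist E (f 0) (\<phi> g (f 0)) = nat k" using s geo_dist[OF bg, of 0 k] k by simp
    then show "\<exists>v. tdist E v (\<phi> g v) = nat k" by blast
  next
    fix y assume "\<exists>v. tdist E v (\<phi> g v) = y"
    then obtain v where "y = tdist E v (\<phi> g v)" by blast
    then show "nat k \<le> y" using disp_lower[OF g bg s k, of v] by (simp add: nat_le_iff)
  qed
  then show ?thesis using k by simp
qed

end



context act
begin

lemma axis_sub:
  assumes g: "g \<in> carrier G"
    and b1: "biinf_geodesic E f1" and s1: "\<forall>i. \<phi> g (f1 i) = f1 (i + l)"
    and b2: "biinf_geodesic E f2" and s2: "\<forall>i. \<phi> g (f2 i) = f2 (i + l)"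
    and l: "l \<ge> 1"
  shows "f1 j \<in> range f2"
proof -
  define c where "c = tdist E (f1 0) (f2 0)"
  define N where "N = \<bar>j\<bar> + int c + 1"
  have NN: "N \<le> N * l" using mult_left_mono[of 1 l N] l unfolding N_def by simp
  define a where "a = f1 (- N * l)"
  define a' where "a' = f2 (- N * l)"
  define b where "b = f1 (N * l)"
  define b' where "b' = f2 (N * l)"
  have "a = \<phi> (g [^]\<^bsub>G\<^esub> (- N)) (f1 0)" unfolding a_def using tpow_int[OF g s1, of "-N" 0] by simp
  moreover have "a' = \<phi> (g [^]\<^bsub>G\<^esub> (- N)) (f2 0)" unfolding a'_def using tpow_int[OF g s2, of "-N" 0] by simp
  ultimately have daa: "tdist E a a' \<le> c" unfolding c_def using iso_le[OF pow_int_closed[OF g]] by simp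
  have "b = \<phi> (g [^]\<^bsub>G\<^esub> N) (f1 0)" unfolding b_def using tpow_int[OF g s1, of "N" 0] by simp
  moreover have "b' = \<phi> (g [^]\<^bsub>G\<^esub> N) (f2 0)" unfolding b'_def using tpow_int[OF g s2, of "N" 0] by simp
  ultimately have dbb: "tdist E b b' \<le> c" unfolding c_def using iso_le[OF pow_int_closed[OF g]] by simp
  obtain wa where wa: "is_walk E wa" "hd wa = a" "last wa = a'" "length wa = Suc (tdist E a a')"
    using tdist_ex by blast
  obtain wb where wb: "is_walk E wb" "hd wb = b" "last wb = b'" "length wb = Suc (tdist E b b')"
    using tdist_ex by blast
  have le: "- N * l \<le> N * l" using NN unfolding N_def by simp
  define M where "M = map f2 [- N * l..N * l]"
  have M: "is_walk E M" "hd M = a'" "last M = b'"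
    using geo_path[OF b2 le] unfolding M_def a'_def b'_def is_path_def by auto
  have rwb: "is_walk E (rev wb)" "hd (rev wb) = b'" "last (rev wb) = b"
    using wb walk_rev[of E, OF sym] by (auto simp: hd_rev last_rev)
  define W1 where "W1 = wa @ tl M"
  have W1: "is_walk E W1" "hd W1 = a" "last W1 = b'" "set W1 \<subseteq> set wa \<union> set M"
    using walk_append_shared[of E wa M] wa M unfolding W1_def by auto
  define W where "W = W1 @ tl (rev wb)"
  have W: "is_walk E W" "hd W = a" "last W = b" "set W \<subseteq> set W1 \<union> set (rev wb)"
    using walk_append_shared[of E W1 "rev wb"] W1 rwb unfolding W_def by auto
  define P where "P = map f1 [- N * l..N * l]"
  have P: "is_path E P" "hd P = a" "last P = b"
    using geo_path[OF b1 le] unfolding P_def a_def b_def by auto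
  have "set P \<subseteq> set W" using path_in_walk[OF W(1) P(1)] P W by simp
  moreover have "f1 j \<in> set P"
  proof -
    have "- (N * l) \<le> j" "j \<le> N * l" using NN unfolding N_def by linarith+
    then show ?thesis unfolding P_def by auto
  qed
  ultimately have "f1 j \<in> set wa \<or> f1 j \<in> set M \<or> f1 j \<in> set wb" using W W1 by auto
  moreover have "f1 j \<notin> set wa"
  proof
    assume "f1 j \<in> set wa"
    then obtain i where i: "i < length wa" "wa ! i = f1 j" by (auto simp: in_set_conv_nth)
    have "tdist E a (f1 j) \<le> i" using tdist_nth[OF wa(1) i(1)] wa i by simp
    moreover have "tdist E a (f1 j) = nat \<bar>- N * l - j\<bar>" unfolding a_def using geo_dist[OF b1] by simp
    ultimately have "nat \<bar>- N * l - j\<bar> \<le> c" using i wa daa by simp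
    then show False using NN unfolding N_def by linarith
  qed
  moreover have "f1 j \<notin> set wb"
  proof
    assume "f1 j \<in> set wb"
    then obtain i where i: "i < length wb" "wb ! i = f1 j" by (auto simp: in_set_conv_nth)
    have "tdist E b (f1 j) \<le> i" using tdist_nth[OF wb(1) i(1)] wb i by simp
    moreover have "tdist E b (f1 j) = nat \<bar>N * l - j\<bar>" unfolding b_def using geo_dist[OF b1] by simp
    ultimately have "nat \<bar>N * l - j\<bar> \<le> c" using i wb dbb by simp
    then show False using NN unfolding N_def by linarith
  qed
  ultimately show ?thesis unfolding M_def by auto
qed

lemma axis_eq:
  assumes g: "g \<in> carrier G" and t: "translates_along E \<phi> g f"
  shows "axis E \<phi> g = range f"
proof
  show "range f \<subseteq> axis E \<phi> g" unfolding axis_def using t by blast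
next
  obtain k where k: "k > 0" "\<forall>i. \<phi> g (f i) = f (i + k)" "biinf_geodesic E f"
    using t unfolding translates_along_def by blast
  have kk: "k = int (transl_len E \<phi> g)" using transl_eq[OF g k(3) k(2) k(1)] .
  show "axis E \<phi> g \<subseteq> range f"
  proof
    fix x assume "x \<in> axis E \<phi> g"
    then obtain f' where t': "translates_along E \<phi> g f'" and x: "x \<in> range f'"
      unfolding axis_def by blast
    obtain k' where k': "k' > 0" "\<forall>i. \<phi> g (f' i) = f' (i + k')" "biinf_geodesic E f'"
      using t' unfolding translates_along_def by blast
    have "k' = int (transl_len E \<phi> g)" using transl_eq[OF g k'(3) k'(2) k'(1)] .
    then have "k' = k" using kk by simp
    obtain j0 where j0: "x = f' j0" using x by blast
    have s': "\<forall>i. \<phi> g (f' i) = f' (i + k)" using k'(2) \<open>k' = k\<close> by simp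
    have "k \<ge> 1" using k(1) by simp
    then show "x \<in> range f" using axis_sub[OF g k'(3) s' k(3) k(2), of j0] j0 by simp
  qed
qed

end



context act
begin

lemma core:
  fixes lg lh :: nat
  assumes g: "g \<in> carrier G" and h: "h \<in> carrier G"
    and bg: "biinf_geodesic E f" and bh: "biinf_geodesic E f'"
    and sg: "\<forall>i. \<phi> g (f i) = f (i + int lg)" and sh: "\<forall>i. \<phi> h (f' i) = f' (i + int lh)"
    and lg: "lg > 0" and lh: "lh > 0"
    and acyl: "acylindrical G E \<phi> \<kappa>"
    and i12: "i1 \<le> i2" and u: "f i1 = f' j1" and v: "f i2 = f' j2"
    and big: "i2 - i1 > int \<kappa> + int lg * int lh"
  shows "\<exists>(m::int) (n::int). g [^]\<^bsub>G\<^esub> m = h [^]\<^bsub>G\<^esub> n \<and> g [^]\<^bsub>G\<^esub> m \<noteq> \<one>\<^bsub>G\<^esub>"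
proof -
  define D where "D = i2 - i1"
  have "tdist E (f i1) (f i2) = tdist E (f' j1) (f' j2)" using u v by simp
  then have "nat \<bar>i1 - i2\<bar> = nat \<bar>j1 - j2\<bar>" using geo_dist[OF bg] geo_dist[OF bh] by simp
  then have jD: "\<bar>j2 - j1\<bar> = D" unfolding D_def using i12 by linarith
  define s :: int where "s = (if j1 \<le> j2 then 1 else -1)"
  have match: "f (i1 + t) = f' (j1 + s * t)" if t: "0 \<le> t" "t \<le> D" for t
  proof -
    define P where "P = map f [i1..i2]"
    have P: "is_path E P" "hd P = f i1" "last P = f i2" using geo_path[OF bg i12] unfolding P_def by auto
    obtain Q where Q: "is_walk E Q" "hd Q = f i1" "last Q = f i2" "set Q = f' ` {min j1 j2..max j1 j2}"
    proof (cases "j1 \<le> j2")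
      case True
      then show ?thesis using that[of "map f' [j1..j2]"] geo_path[OF bh True] u v
        by (auto simp: is_path_def)
    next
      case False
      then have le: "j2 \<le> j1" by simp
      have "is_walk E (rev (map f' [j2..j1]))" using geo_path[OF bh le] walk_rev[of E, OF sym]
        by (auto simp: is_path_def)
      moreover have "hd (rev (map f' [j2..j1])) = f i1" "last (rev (map f' [j2..j1])) = f i2"
        using geo_path[OF bh le] u v by (auto simp: hd_rev last_rev)
      ultimately show ?thesis using that[of "rev (map f' [j2..j1])"] False by auto
    qed
    have "f (i1 + t) \<in> set P" unfolding P_def using t unfolding D_def by auto
    then have "f (i1 + t) \<in> set Q" using path_in_walk[OF Q(1) P(1)] P Q by auto
    then obtain j where j: "min j1 j2 \<le> j" "j \<le> max j1 j2" "f (i1 + t) = f' j" using Q(4) by auto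
    have "tdist E (f i1) (f (i1 + t)) = tdist E (f' j1) (f' j)" using u j by simp
    then have "nat \<bar>t\<bar> = nat \<bar>j1 - j\<bar>" using geo_dist[OF bg] geo_dist[OF bh] by simp
    then have "j = j1 + s * t" using j t unfolding s_def by (auto split: if_splits)
    then show ?thesis using j by simp
  qed
  define a where "a = g [^]\<^bsub>G\<^esub> (int lh)"
  define b where "b = h [^]\<^bsub>G\<^esub> (s * int lg)"
  have ac: "a \<in> carrier G" unfolding a_def using pow_int_closed[OF g] .
  have bc: "b \<in> carrier G" unfolding b_def using pow_int_closed[OF h] .
  let ?L = "int lg * int lh"
  have fix1: "\<phi> (inv\<^bsub>G\<^esub> b \<otimes>\<^bsub>G\<^esub> a) (f (i1 + t)) = f (i1 + t)" if t: "0 \<le> t" "t \<le> D - ?L" for t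
  proof -
    have L0: "0 \<le> ?L" by simp
    have "\<phi> a (f (i1 + t)) = f (i1 + t + ?L)" unfolding a_def using tpow_int[OF g sg, of "int lh" "i1 + t"]
      by (simp add: algebra_simps)
    also have "\<dots> = f' (j1 + s * (t + ?L))" using match[of "t + ?L"] t L0 by (simp add: algebra_simps)
    also have "\<dots> = \<phi> b (f' (j1 + s * t))" unfolding b_def using tpow_int[OF h sh, of "s * int lg" "j1 + s * t"]
      by (simp add: algebra_simps)
    also have "\<dots> = \<phi> b (f (i1 + t))" using match[of t] t L0 by simp
    finally have "\<phi> a (f (i1 + t)) = \<phi> b (f (i1 + t))" .
    then show ?thesis using phi_mult[OF group.inv_closed[OF grp bc] ac] phi_inv[OF bc] by simp
  qed
  have le2: "i1 \<le> i1 + (D - ?L)" using big unfolding D_def by simp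
  define p where "p = map f [i1..i1 + (D - ?L)]"
  have pp: "is_path E p" unfolding p_def using geo_path[OF bg le2] by simp
  have "length p \<ge> \<kappa> + 2" unfolding p_def using big unfolding D_def by simp
  then have st: "{c \<in> carrier G. \<forall>v\<in>set p. \<phi> c v = v} = {\<one>\<^bsub>G\<^esub>}"
    using acyl pp unfolding acylindrical_def by blast
  have "\<forall>w\<in>set p. \<phi> (inv\<^bsub>G\<^esub> b \<otimes>\<^bsub>G\<^esub> a) w = w"
  proof
    fix w assume "w \<in> set p"
    then obtain x where x: "i1 \<le> x" "x \<le> i1 + (D - ?L)" "w = f x" unfolding p_def by auto
    then show "\<phi> (inv\<^bsub>G\<^esub> b \<otimes>\<^bsub>G\<^esub> a) w = w" using fix1[of "x - i1"] by simp
  qed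
  moreover have "inv\<^bsub>G\<^esub> b \<otimes>\<^bsub>G\<^esub> a \<in> carrier G" using ac bc grp by (simp add: group.inv_closed monoid.m_closed group.is_monoid)
  ultimately have "inv\<^bsub>G\<^esub> b \<otimes>\<^bsub>G\<^esub> a = \<one>\<^bsub>G\<^esub>" using st by blast
  then have ab: "a = b" using ac bc grp by (metis group.inv_equality group.inv_inv group.inv_closed)
  have "a \<noteq> \<one>\<^bsub>G\<^esub>"
  proof
    assume "a = \<one>\<^bsub>G\<^esub>"
    then have "f 0 = f (int lh * int lg)" using tpow_int[OF g sg, of "int lh" 0] phi_one unfolding a_def by simp
    then have "int lh * int lg = 0" using geo_inj[OF bg] by metis
    then show False using lg lh by simp
  qed
  then show ?thesis using ab unfolding a_def b_def by blast
qed

end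


theorem lemma2p6:
  fixes G :: "('g, 'b) monoid_scheme" and E :: "'v \<Rightarrow> 'v \<Rightarrow> bool"
    and \<phi> :: "'g \<Rightarrow> 'v \<Rightarrow> 'v" and \<kappa> :: nat and g h :: 'g
  assumes "tree_action G E \<phi>"
    and "torsion_free G"
    and "acylindrical G E \<phi> \<kappa>"
    and "loxodromic G E \<phi> g" and "loxodromic G E \<phi> h"
    and "\<not> (\<exists>(m::int) (n::int). g [^]\<^bsub>G\<^esub> m = h [^]\<^bsub>G\<^esub> n \<and> g [^]\<^bsub>G\<^esub> m \<noteq> \<one>\<^bsub>G\<^esub>)"
  shows "\<forall>u \<in> axis E \<phi> g \<inter> axis E \<phi> h. \<forall>v \<in> axis E \<phi> g \<inter> axis E \<phi> h.
           tdist E u v \<le> \<kappa> + transl_len E \<phi> g * transl_len E \<phi> h"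
proof -
  have A: "act E G \<phi>" unfolding act_def act_axioms_def tr_def
    using assms(1) by (simp add: tree_action_def)
  interpret act E G \<phi> by (rule A)
  have g: "g \<in> carrier G" and h: "h \<in> carrier G"
    using assms(4,5) unfolding loxodromic_def by auto
  obtain fg where tg: "translates_along E \<phi> g fg" using assms(4) unfolding loxodromic_def by blast
  obtain fh where th: "translates_along E \<phi> h fh" using assms(5) unfolding loxodromic_def by blast
  obtain kg where kg: "kg > 0" "\<forall>i. \<phi> g (fg i) = fg (i + kg)" "biinf_geodesic E fg"
    using tg unfolding translates_along_def by blast
  obtain kh where kh: "kh > 0" "\<forall>i. \<phi> h (fh i) = fh (i + kh)" "biinf_geodesic E fh"
    using th unfolding translates_along_def by blast
  define lg where "lg = transl_len E \<phi> g"
  define lh where "lh = transl_len E \<phi> h"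
  have kgl: "kg = int lg" unfolding lg_def using transl_eq[OF g kg(3) kg(2) kg(1)] .
  have khl: "kh = int lh" unfolding lh_def using transl_eq[OF h kh(3) kh(2) kh(1)] .
  have sg: "\<forall>i. \<phi> g (fg i) = fg (i + int lg)" using kg(2) kgl by simp
  have sh: "\<forall>i. \<phi> h (fh i) = fh (i + int lh)" using kh(2) khl by simp
  have lg0: "lg > 0" using kg(1) kgl by simp
  have lh0: "lh > 0" using kh(1) khl by simp
  have ag: "axis E \<phi> g = range fg" using axis_eq[OF g tg] .
  have ah: "axis E \<phi> h = range fh" using axis_eq[OF h th] .
  show ?thesis
  proof (intro ballI)
    fix u v assume uu: "u \<in> axis E \<phi> g \<inter> axis E \<phi> h" and vv: "v \<in> axis E \<phi> g \<inter> axis E \<phi> h"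
    have r: "u \<in> range fg" "u \<in> range fh" "v \<in> range fg" "v \<in> range fh" using uu vv ag ah by auto
    obtain i1 where u1: "u = fg i1" using r(1) by blast
    obtain j1 where u2: "u = fh j1" using r(2) by blast
    obtain i2 where v1: "v = fg i2" using r(3) by blast
    obtain j2 where v2: "v = fh j2" using r(4) by blast
    note u = u1 u2 and v = v1 v2
    have d: "tdist E u v = nat \<bar>i1 - i2\<bar>" using u v geo_dist[OF kg(3)] by simp
    show "tdist E u v \<le> \<kappa> + transl_len E \<phi> g * transl_len E \<phi> h"
    proof (rule ccontr)
      assume "\<not> ?thesis"
      then have "nat \<bar>i1 - i2\<bar> > \<kappa> + lg * lh" using d unfolding lg_def lh_def by simp
      then have "int (\<kappa> + lg * lh) < int (nat \<bar>i1 - i2\<bar>)" by (simp only: of_nat_less_iff)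
      then have big: "\<bar>i1 - i2\<bar> > int \<kappa> + int lg * int lh" by simp
      have e1: "fg i1 = fh j1" "fg i2 = fh j2" using u v by simp_all
      have "\<exists>(m::int) (n::int). g [^]\<^bsub>G\<^esub> m = h [^]\<^bsub>G\<^esub> n \<and> g [^]\<^bsub>G\<^esub> m \<noteq> \<one>\<^bsub>G\<^esub>"
      proof (cases "i1 \<le> i2")
        case True
        have "i2 - i1 > int \<kappa> + int lg * int lh" using big True by simp
        then show ?thesis using core[OF g h kg(3) kh(3) sg sh lg0 lh0 assms(3) True e1(1) e1(2)] by blast
      next
        case False
        then have le: "i2 \<le> i1" by simp
        have "i1 - i2 > int \<kappa> + int lg * int lh" using big False by simp
        then show ?thesis using core[OF g h kg(3) kh(3) sg sh lg0 lh0 assms(3) le e1(2) e1(1)] by blast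
      qed
      then show False using assms(6) by blast
    qed
  qed
qed

end
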